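(* Consider the two-sample Poisson testing problem $H_0$ vs. $H_1$ described in the context, with fixed $\beta\in(1/2,1)$ and $r>0$, under the high-counts condition $\min_{1\le i\le N}nP_i/\log N\to\infty$. Let $\rho^{\mathsf{Bonf}}_{\mathsf{high}}(\beta)=2(1-\sqrt{1-\beta})^2$. If $r>\rho^{\mathsf{Bonf}}_{\mathsf{high}}(\beta)$, then the min-P test is asymptotically powerful: there exist thresholds $t_N$ such that $\Pr_{H_0}(\pi_{(1)}\le t_N)+\Pr_{H_1}(\pi_{(1)}>t_N)\to0$, where $\pi_{(1)}=\min_{1\le i\le N}\pi_i$.
   Context: Asymptotic setting: $N\to\infty$ and $n=n(N)\to\infty$. For each $N$, $P=(P_1,\dots,P_N)$ is a vector with $P_i>0$ and $\sum_i P_i=1$. Fix $\beta$ and $r>0$, set $\epsilon_N=N^{-\beta}$ and $\mu=\mu_{N,n}=r\log(N)/(2n)$, and define $Q_i^\pm\ge0$ by $\sqrt{Q_i^\pm}=\max\{\sqrt{P_i}\pm\sqrt{\mu},0\}$. The data are $X_1,\dots,X_N,Y_1,\dots,Y_N$, all mutually independent. Under $H_0$: $X_i\sim\mathrm{Pois}(nP_i)$ and $Y_i\sim\mathrm{Pois}(nP_i)$. Under $H_1$: $X_i\sim\mathrm{Pois}(nP_i)$ and $Y_i\sim(1-\epsilon_N)\mathrm{Pois}(nP_i)+\frac{\epsilon_N}{2}\mathrm{Pois}(nQ_i^+)+\frac{\epsilon_N}{2}\mathrm{Pois}(nQ_i^-)$ (a mixture; $\mathrm{Pois}(0)$ is the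 point mass at $0$). Binomial allocation P-values: for nonnegative integers $x,y$ put $m=x+y$, let $B\sim\mathrm{Bin}(m,1/2)$ and $\pi(x,y)=\Pr(|B-m/2|\ge|x-m/2|)$ (two-sided exact binomial test). Set $\pi_i=\pi(X_i,Y_i)$. *)

theory Defs
  imports "HOL-Probability.Probability"
begin

definition pois :: "real \<Rightarrow> nat pmf" where
  "pois lam = (if lam = 0 then return_pmf 0 else poisson_pmf lam)"

definition binom_pval :: "nat \<Rightarrow> nat \<Rightarrow> real" where
  "binom_pval x y = measure_pmf.prob (binomial_pmf (x + y) (1/2))
     {k. \<bar>real k - real (x + y) / 2\<bar> \<ge> \<bar>real x - real (x + y) / 2\<bar>}"

definition eps_N :: "real \<Rightarrow> nat \<Rightarrow> real" where
  "eps_N \<beta> N = real N powr (- \<beta>)"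

definition mu_N :: "real \<Rightarrow> real \<Rightarrow> nat \<Rightarrow> real" where
  "mu_N r n N = r * ln (real N) / (2 * n)"

definition Qplus :: "real \<Rightarrow> real \<Rightarrow> real" where
  "Qplus p mu = (max (sqrt p + sqrt mu) 0)\<^sup>2"

definition Qminus :: "real \<Rightarrow> real \<Rightarrow> real" where
  "Qminus p mu = (max (sqrt p - sqrt mu) 0)\<^sup>2"

definition Y_alt :: "real \<Rightarrow> real \<Rightarrow> real \<Rightarrow> real \<Rightarrow> nat pmf" where
  "Y_alt eps n p mu =
     bind_pmf (bernoulli_pmf eps) (\<lambda>b. if b
        then bind_pmf (bernoulli_pmf (1/2))
               (\<lambda>c. if c then pois (n * Qplus p mu) else pois (n * Qminus p mu))
        else pois (n * p))"

text \<open>Joint law of ((X_i,Y_i))_{i<N} (indices 0..N-1), mutually independent.\<close>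
definition H0_law :: "nat \<Rightarrow> real \<Rightarrow> (nat \<Rightarrow> real) \<Rightarrow> (nat \<Rightarrow> nat \<times> nat) pmf" where
  "H0_law N n P = Pi_pmf {..<N} (0, 0) (\<lambda>i. pair_pmf (pois (n * P i)) (pois (n * P i)))"

definition H1_law :: "real \<Rightarrow> real \<Rightarrow> nat \<Rightarrow> real \<Rightarrow> (nat \<Rightarrow> real) \<Rightarrow> (nat \<Rightarrow> nat \<times> nat) pmf" where
  "H1_law \<beta> r N n P = Pi_pmf {..<N} (0, 0)
     (\<lambda>i. pair_pmf (pois (n * P i)) (Y_alt (eps_N \<beta> N) n (P i) (mu_N r n N)))"

definition min_pval :: "nat \<Rightarrow> (nat \<Rightarrow> nat \<times> nat) \<Rightarrow> real" where
  "min_pval N \<omega> = Min ((\<lambda>i. binom_pval (fst (\<omega> i)) (snd (\<omega> i))) ` {..<N})"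

end

theory Submission
  imports Defs
begin

lemma ln_lb_aux: fixes t :: real assumes "0 \<le> t" shows "2*t/(2+t) \<le> ln (1+t)"
proof -
  let ?f = "\<lambda>s::real. ln (1 + s) - (2 * s) / (2 + s)"
  have "?f 0 \<le> ?f t"
  proof (rule DERIV_nonneg_imp_nondecreasing[OF assms])
    fix x :: real assume x: "0 \<le> x" "x \<le> t"
    have "(?f has_real_derivative (1/(1+x) - (2*(2+x) - 2*x)/(2+x)^2)) (at x)"
      using x by (auto intro!: derivative_eq_intros simp: power2_eq_square)
    moreover have "(2*(2+x) - 2*x)/(2+x)^2 \<le> 1/(1+x)"
    proof -
      have "(2*(2+x) - 2*x) * (1+x) \<le> 1 * (2+x)^2" using x by (simp add: power2_eq_square algebra_simps)
      then show ?thesis using x by (simp add: divide_simps)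
    qed
    then have "1/(1+x) - (2*(2+x) - 2*x)/(2+x)^2 \<ge> 0" by simp
    ultimately show "\<exists>y. (?f has_real_derivative y) (at x) \<and> 0 \<le> y" by auto
  qed
  then show ?thesis by simp
qed

lemma ln_ub_aux: fixes x :: real assumes "1 \<le> x" shows "ln x \<le> (x - 1/x)/2"
proof -
  let ?f = "\<lambda>s::real. (s - 1/s)/2 - ln s"
  have "?f 1 \<le> ?f x"
  proof (rule DERIV_nonneg_imp_nondecreasing[OF assms])
    fix y :: real assume y: "1 \<le> y" "y \<le> x"
    have "(?f has_real_derivative ((1 + 1/y^2)/2 - 1/y)) (at y)"
      using y by (auto intro!: derivative_eq_intros simp: power2_eq_square field_simps)
    moreover have "(1 + 1/y^2)/2 - 1/y = (y-1)^2/(2*y^2)"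
      using y by (simp add: field_simps power2_eq_square; simp add: algebra_simps)
    moreover have "(y-1)^2/(2*y^2) \<ge> 0" using y by simp
    ultimately show "\<exists>d. (?f has_real_derivative d) (at y) \<and> 0 \<le> d" by auto
  qed
  then show ?thesis by simp
qed

lemma ln_lb2_aux: fixes x :: real assumes "1 \<le> x" shows "(x-1) - (x-1)^2/2 \<le> ln x"
proof -
  let ?f = "\<lambda>s::real. ln s - (s-1) + (s-1)^2/2"
  have "?f 1 \<le> ?f x"
  proof (rule DERIV_nonneg_imp_nondecreasing[OF assms])
    fix y :: real assume y: "1 \<le> y" "y \<le> x"
    have "(?f has_real_derivative (1/y - 1 + (y-1))) (at y)"
      using y by (auto intro!: derivative_eq_intros simp: power2_eq_square field_simps)
    moreover have "1/y - 1 + (y-1) = (y-1)^2/y"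
      using y by (simp add: field_simps power2_eq_square; simp add: algebra_simps)
    moreover have "(y-1)^2/y \<ge> 0" using y by simp
    ultimately show "\<exists>d. (?f has_real_derivative d) (at y) \<and> 0 \<le> d" by auto
  qed
  then show ?thesis by simp
qed

lemma ln_fact_ub: "ln (fact (Suc k)) \<le> 1 + ln (real (Suc k))/2 + real (Suc k) * ln (real (Suc k)) - real (Suc k)"
proof (induction k)
  case 0
  then show ?case by simp
next
  case (Suc k)
  define x where "x = real (Suc k)"
  have x1: "1 \<le> x" by (simp add: x_def)
  have step: "2/(2*x+1) \<le> ln (x+1) - ln x"
  proof -
    have "2*(1/x)/(2+1/x) \<le> ln (1 + 1/x)" using x1 by (intro ln_lb_aux) simp
    moreover have "2*(1/x)/(2+1/x) = 2/(2*x+1)" using x1 by (simp add: field_simps)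
    moreover have "ln (1 + 1/x) = ln (x+1) - ln x"
    proof -
      have "1 + 1/x = (x+1)/x" using x1 by (simp add: field_simps)
      then show ?thesis using x1 by (simp add: ln_div)
    qed
    ultimately show ?thesis by simp
  qed
  have step': "1 \<le> (x + 1/2) * (ln (x+1) - ln x)"
  proof -
    have "1 = (x+1/2) * (2/(2*x+1))" using x1 by (simp add: field_simps)
    also have "\<dots> \<le> (x+1/2) * (ln (x+1) - ln x)" using step x1 by (intro mult_left_mono) auto
    finally show ?thesis .
  qed
  have "ln (fact (Suc (Suc k))) = ln (x+1) + ln (fact (Suc k))"
    by (simp add: x_def ln_mult add.commute del: of_nat_Suc)
  also have "\<dots> \<le> ln (x+1) + (1 + ln x/2 + x * ln x - x)"
    using Suc.IH by (simp add: x_def)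
  also have "\<dots> \<le> 1 + ln (x+1)/2 + (x+1) * ln (x+1) - (x+1)"
    using step' by (simp add: algebra_simps)
  finally show ?case by (simp add: x_def add.commute)
qed

lemma fact_ub: assumes "1 \<le> k" shows "ln (fact k) \<le> 1 + ln (real k)/2 + real k * ln (real k) - real k"
  using ln_fact_ub[of "k - 1"] assms by simp

lemma exp1_sqrt: assumes "0 < (K::real)" shows "exp 1 * sqrt K = exp (1 + ln K / 2)"
proof -
  have "sqrt K = K powr (1/2)" using assms by (simp add: powr_half_sqrt)
  also have "\<dots> = exp (ln K / 2)" using assms by (simp add: powr_def)
  finally show ?thesis by (simp add: exp_add)
qed

lemma pois_pmf_expr: assumes "0 < lam" "1 \<le> k"
  shows "exp (real k * ln lam - 1 - ln (real k)/2 - real k * ln (real k) + real k - lam) \<le> pmf (poisson_pmf lam) k"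
proof -
  define K where "K = real k"
  have K1: "1 \<le> K" using assms by (simp add: K_def)
  have f: "fact k \<le> exp (1 + ln K/2 + K * ln K - K)"
  proof -
    have "ln (fact k) \<le> 1 + ln K/2 + K * ln K - K" using fact_ub[OF assms(2)] by (simp add: K_def)
    then show ?thesis by (metis exp_le_cancel_iff exp_ln fact_gt_zero)
  qed
  have p: "lam ^ k = exp (K * ln lam)"
    using assms(1) by (simp add: K_def exp_of_nat_mult)
  have "exp (K * ln lam - 1 - ln K/2 - K * ln K + K - lam) = exp (K * ln lam) / exp (1 + ln K/2 + K * ln K - K) * exp (-lam)"
    by (simp add: exp_diff[symmetric] exp_add[symmetric])
  also have "\<dots> \<le> exp (K * ln lam) / fact k * exp (-lam)"
    using f by (intro mult_right_mono divide_left_mono) (auto simp: fact_gt_zero)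
  also have "\<dots> = pmf (poisson_pmf lam) k" using assms(1) p by simp
  finally show ?thesis by (simp add: K_def)
qed

lemma pois_pmf_lb_up: assumes "0 < lam" "1 \<le> k" "lam \<le> real k"
  shows "exp (- ((real k - lam)^2)/(2 * lam)) / (exp 1 * sqrt (real k)) \<le> pmf (poisson_pmf lam) k"
proof -
  define K where "K = real k"
  have K1: "1 \<le> K" using assms by (simp add: K_def)
  have "ln (K/lam) \<le> (K/lam - 1/(K/lam))/2" using assms by (intro ln_ub_aux) (simp add: K_def)
  moreover have "ln (K/lam) = ln K - ln lam" using assms K1 by (simp add: ln_div)
  ultimately have "K * (ln K - ln lam) \<le> K * ((K/lam - 1/(K/lam))/2)" using K1 by (intro mult_left_mono) auto
  also have "K * ((K/lam - 1/(K/lam))/2) = (K - lam)^2/(2 * lam) + K - lam"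
    using assms K1 by (simp add: field_simps power2_eq_square)
  finally have key: "- ((K - lam)^2)/(2 * lam) - 1 - ln K/2 \<le> K * ln lam - 1 - ln K/2 - K * ln K + K - lam"
    by (simp add: algebra_simps)
  have "exp (- ((K - lam)^2)/(2 * lam)) / (exp 1 * sqrt K) = exp (- ((K - lam)^2)/(2 * lam) - 1 - ln K/2)"
    using K1 by (simp add: exp1_sqrt exp_diff[symmetric])
  also have "\<dots> \<le> exp (K * ln lam - 1 - ln K/2 - K * ln K + K - lam)" using key by simp
  also have "\<dots> \<le> pmf (poisson_pmf lam) k" using pois_pmf_expr[OF assms(1,2)] by (simp add: K_def)
  finally show ?thesis by (simp add: K_def)
qed

lemma pois_pmf_lb_low: assumes "0 < lam" "1 \<le> k" "real k \<le> lam"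
  shows "exp (- ((lam - real k)^2)/(2 * real k)) / (exp 1 * sqrt (real k)) \<le> pmf (poisson_pmf lam) k"
proof -
  define K where "K = real k"
  have K1: "1 \<le> K" using assms by (simp add: K_def)
  have "(lam/K - 1) - ((lam/K - 1)^2)/2 \<le> ln (lam/K)" using assms K1 by (intro ln_lb2_aux) (simp add: K_def)
  moreover have "ln (lam/K) = ln lam - ln K" using assms K1 by (simp add: ln_div)
  ultimately have "K * ((lam/K - 1) - ((lam/K - 1)^2)/2) \<le> K * (ln lam - ln K)" using K1 by (intro mult_left_mono) auto
  moreover have "K * ((lam/K - 1) - ((lam/K - 1)^2)/2) = (lam - K) - ((lam - K)^2)/(2 * K)"
    using assms K1 by (simp add: field_simps power2_eq_square)
  ultimately have key: "- ((lam - K)^2)/(2 * K) - 1 - ln K/2 \<le> K * ln lam - 1 - ln K/2 - K * ln K + K - lam"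
    by (simp add: algebra_simps)
  have "exp (- ((lam - K)^2)/(2 * K)) / (exp 1 * sqrt K) = exp (- ((lam - K)^2)/(2 * K) - 1 - ln K/2)"
    using K1 by (simp add: exp1_sqrt exp_diff[symmetric])
  also have "\<dots> \<le> exp (K * ln lam - 1 - ln K/2 - K * ln K + K - lam)" using key by simp
  also have "\<dots> \<le> pmf (poisson_pmf lam) k" using pois_pmf_expr[OF assms(1,2)] by (simp add: K_def)
  finally show ?thesis by (simp add: K_def)
qed

lemma prob_ge_sum_finite:
  assumes "finite S" "S \<subseteq> A"
  shows "sum (pmf M) S \<le> measure_pmf.prob M A"
proof -
  have "measure_pmf.prob M S \<le> measure_pmf.prob M A"
    using assms by (intro measure_pmf.finite_measure_mono) auto
  then show ?thesis using assms by (simp add: measure_measure_pmf_finite)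
qed

lemma pois_upper_tail:
  assumes lam1: "1 \<le> lam" and D0: "0 \<le> D" and Dl: "D \<le> lam"
  shows "exp (- ((D + 1 + sqrt lam)^2) / (2 * lam)) / (2 * exp 1)
           \<le> measure_pmf.prob (poisson_pmf lam) {k. lam + D \<le> real k}"
proof -
  define K where "K = nat (ceiling (lam + D))"
  define J where "J = nat (floor (sqrt lam))"
  define c where "c = exp (- ((D + 1 + sqrt lam)^2) / (2 * lam)) / (exp 1 * (2 * sqrt lam))"
  have sq1: "1 \<le> sqrt lam" using lam1 by simp
  have sql: "sqrt lam \<le> lam"
  proof -
    have "sqrt lam * 1 \<le> sqrt lam * sqrt lam" using sq1 by (intro mult_left_mono) auto
    then show ?thesis using lam1 by simp
  qed
  have Kc: "real K = of_int (ceiling (lam + D))"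
    unfolding K_def using lam1 D0 by (intro of_nat_nat) linarith
  have K1: "lam + D \<le> real K" "real K < lam + D + 1"
    using ceiling_correct[of "lam + D"] unfolding Kc by linarith+
  have Jc: "real J = of_int (floor (sqrt lam))"
    unfolding J_def using sq1 by (intro of_nat_nat) linarith
  have J1: "real J \<le> sqrt lam" "sqrt lam < real J + 1"
    using floor_correct[of "sqrt lam"] unfolding Jc by linarith+
  have c0: "0 \<le> c" using lam1 by (simp add: c_def)
  have pk: "c \<le> pmf (poisson_pmf lam) k" if k: "k \<in> {K..K+J}" for k
  proof -
    have kl: "lam + D \<le> real k" "real k \<le> lam + D + 1 + sqrt lam" using k K1 J1 by auto
    have k1: "1 \<le> k" using kl lam1 D0 by linarith
    have "(real k - lam)^2 \<le> (D + 1 + sqrt lam)^2" using kl D0 by (intro power_mono) auto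
    then have e: "exp (- ((D + 1 + sqrt lam)^2) / (2 * lam)) \<le> exp (- ((real k - lam)^2) / (2 * lam))"
      using lam1 by (simp add: divide_right_mono)
    have "sqrt (real k) \<le> sqrt (4 * lam)" using kl Dl sql lam1 by (intro real_sqrt_le_mono) linarith
    also have "sqrt (4 * lam) = 2 * sqrt lam" by (simp add: real_sqrt_mult)
    finally have s: "sqrt (real k) \<le> 2 * sqrt lam" .
    have "c \<le> exp (- ((real k - lam)^2) / (2 * lam)) / (exp 1 * sqrt (real k))"
      unfolding c_def using e s k1 by (intro frac_le) auto
    also have "\<dots> \<le> pmf (poisson_pmf lam) k" using pois_pmf_lb_up[of lam k] lam1 k1 kl D0 by auto
    finally show ?thesis .
  qed
  have "exp (- ((D + 1 + sqrt lam)^2) / (2 * lam)) / (2 * exp 1) = sqrt lam * c"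
    using sq1 by (simp add: c_def field_simps)
  also have "\<dots> \<le> real (card {K..K+J}) * c" using J1 c0 by (intro mult_right_mono) auto
  also have "\<dots> = (\<Sum>k\<in>{K..K+J}. c)" by simp
  also have "\<dots> \<le> sum (pmf (poisson_pmf lam)) {K..K+J}" using pk by (intro sum_mono) auto
  also have "\<dots> \<le> measure_pmf.prob (poisson_pmf lam) {k. lam + D \<le> real k}"
    using K1 by (intro prob_ge_sum_finite) auto
  finally show ?thesis .
qed

lemma pois_lower_tail:
  assumes lam0: "0 < lam" and D0: "0 \<le> D" and cond: "D + 2 + sqrt lam \<le> lam / 2"
  shows "exp (- ((D + 1 + sqrt lam)^2) / (2 * (lam - D - 1 - sqrt lam))) / exp 1
           \<le> measure_pmf.prob (poisson_pmf lam) {k. real k \<le> lam - D}"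
proof -
  define K where "K = nat (floor (lam - D))"
  define J where "J = nat (floor (sqrt lam))"
  define den where "den = lam - D - 1 - sqrt lam"
  define c where "c = exp (- ((D + 1 + sqrt lam)^2) / (2 * den)) / (exp 1 * sqrt lam)"
  have sq0: "0 \<le> sqrt lam" using lam0 by simp
  have den1: "1 \<le> den" using cond sq0 lam0 unfolding den_def by linarith
  have Kc: "real K = of_int (floor (lam - D))"
    unfolding K_def using cond sq0 lam0 by (intro of_nat_nat) linarith
  have K1: "real K \<le> lam - D" "lam - D - 1 < real K"
    using floor_correct[of "lam - D"] unfolding Kc by linarith+
  have Jc: "real J = of_int (floor (sqrt lam))"
    unfolding J_def using sq0 by (intro of_nat_nat) linarith
  have J1: "real J \<le> sqrt lam" "sqrt lam < real J + 1"
    using floor_correct[of "sqrt lam"] unfolding Jc by linarith+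
  have JK: "J \<le> K" using K1 J1 cond lam0 sq0 by linarith
  have c0: "0 \<le> c" using lam0 by (simp add: c_def)
  have pk: "c \<le> pmf (poisson_pmf lam) k" if k: "k \<in> {K-J..K}" for k
  proof -
    have "real (K - J) = real K - real J" using JK by simp
    then have kl: "real k \<le> lam - D" "den \<le> real k" using k K1 J1 unfolding den_def by auto
    have k1: "1 \<le> k" using kl den1 by linarith
    have "(lam - real k)^2 \<le> (D + 1 + sqrt lam)^2" using kl D0 unfolding den_def by (intro power_mono) auto
    moreover have "0 < 2 * den" using den1 by simp
    moreover have "2 * den \<le> 2 * real k" using kl by simp
    ultimately have "(lam - real k)^2 / (2 * real k) \<le> (D + 1 + sqrt lam)^2 / (2 * den)"
      by (intro frac_le) auto
    then have e: "exp (- ((D + 1 + sqrt lam)^2) / (2 * den)) \<le> exp (- ((lam - real k)^2) / (2 * real k))"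
      by simp
    have s: "sqrt (real k) \<le> sqrt lam" using kl D0 by (intro real_sqrt_le_mono) linarith
    have "c \<le> exp (- ((lam - real k)^2) / (2 * real k)) / (exp 1 * sqrt (real k))"
      unfolding c_def using e s k1 by (intro frac_le) auto
    also have "\<dots> \<le> pmf (poisson_pmf lam) k" using pois_pmf_lb_low[of lam k] lam0 k1 kl D0 by auto
    finally show ?thesis .
  qed
  have sqp: "0 < sqrt lam" using lam0 by simp
  have "exp (- ((D + 1 + sqrt lam)^2) / (2 * den)) / exp 1 = sqrt lam * c"
    using sqp by (simp add: c_def field_simps)
  also have "\<dots> \<le> real (card {K-J..K}) * c" using J1 c0 JK by (intro mult_right_mono) auto
  also have "\<dots> = (\<Sum>k\<in>{K-J..K}. c)" by simp
  also have "\<dots> \<le> sum (pmf (poisson_pmf lam)) {K-J..K}" using pk by (intro sum_mono) auto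
  also have "\<dots> \<le> measure_pmf.prob (poisson_pmf lam) {k. real k \<le> lam - D}"
    using K1 by (intro prob_ge_sum_finite) auto
  finally show ?thesis by (simp add: den_def)
qed

lemma binom_pval_hoeff:
  assumes "x < y"
  shows "binom_pval x y \<le> 2 * exp (- ((real y - real x)^2) / (2 * real (x + y)))"
proof -
  define m where "m = x + y"
  have m0: "0 < m" using assms by (simp add: m_def)
  define e where "e = \<bar>real x - real m / 2\<bar>"
  have e0: "0 \<le> e" by (simp add: e_def)
  have bd: "binomial_distribution (1/2::real)" by unfold_locales auto
  have "binom_pval x y = measure_pmf.prob (binomial_pmf m (1/2)) {k. e \<le> \<bar>real k - real m * (1/2)\<bar>}"
    unfolding binom_pval_def m_def[symmetric] e_def by (simp add: field_simps)
  also have "\<dots> \<le> 2 * exp (-2 * e\<^sup>2 / m)"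
    using binomial_distribution.prob_abs_ge[OF bd m0 e0] by simp
  also have "-2 * e\<^sup>2 / m = - ((real y - real x)^2) / (2 * real (x + y))"
  proof -
    have "real x - real m / 2 = - ((real y - real x) / 2)" by (simp add: m_def field_simps)
    then have e2: "e^2 = ((real y - real x) / 2)^2" by (simp add: e_def power2_abs power_divide)
    show ?thesis using m0 by (simp add: e2 power_divide m_def)
  qed
  finally show ?thesis .
qed

lemma pval_superuniform:
  assumes t0: "0 \<le> t"
  shows "measure_pmf.prob (binomial_pmf m (1/2)) {k. binom_pval k (m - k) \<le> t} \<le> t"
proof -
  define B where "B = binomial_pmf m (1/2)"
  define d where "d = (\<lambda>k::nat. \<bar>real k - real m / 2\<bar>)"
  have G: "binom_pval k (m - k) = measure_pmf.prob B {j. d k \<le> d j}" if "k \<le> m" for k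
    using that by (simp add: binom_pval_def B_def d_def)
  define S where "S = {k. binom_pval k (m - k) \<le> t}"
  define S' where "S' = S \<inter> {..m}"
  have setB: "set_pmf B = {..m}" by (simp add: B_def)
  have "measure_pmf.prob B S \<le> measure_pmf.prob B S'"
    by (intro measure_pmf.finite_measure_mono_AE) (auto simp: AE_measure_pmf_iff setB S'_def)
  also have "\<dots> \<le> t"
  proof (cases "S' = {}")
    case True then show ?thesis using t0 by simp
  next
    case False
    have fin: "finite S'" by (simp add: S'_def)
    define d0 where "d0 = Min (d ` S')"
    have "d0 \<in> d ` S'" unfolding d0_def using fin False by (intro Min_in) auto
    then obtain k0 where k0: "k0 \<in> S'" "d k0 = d0" by auto
    have mn: "d0 \<le> d k" if "k \<in> S'" for k unfolding d0_def using fin that by (intro Min_le) auto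
    have "measure_pmf.prob B S' \<le> measure_pmf.prob B {j. d k0 \<le> d j}"
      using mn k0 by (intro measure_pmf.finite_measure_mono) auto
    also have "\<dots> = binom_pval k0 (m - k0)" using k0 by (subst G) (auto simp: S'_def)
    also have "\<dots> \<le> t" using k0 by (simp add: S'_def S_def)
    finally show ?thesis .
  qed
  finally show ?thesis by (simp add: B_def S_def)
qed

lemma pmf_map_split:
  "pmf (map_pmf (\<lambda>k. (k, m - k)) (binomial_pmf m (1/2))) (x, y) =
     (if m = x + y then pmf (binomial_pmf m (1/2)) x else 0)"
proof -
  have "pmf (map_pmf (\<lambda>k. (k, m - k)) (binomial_pmf m (1/2))) (x, y) =
        measure_pmf.prob (binomial_pmf m (1/2)) ((\<lambda>k. (k, m - k)) -` {(x, y)})"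
    by (simp add: pmf_map)
  also have "\<dots> = (if m = x + y then pmf (binomial_pmf m (1/2)) x else 0)"
  proof (cases "m = x + y")
    case True
    then have "(\<lambda>k. (k, m - k)) -` {(x, y)} = {x}" by auto
    then show ?thesis using True by (simp add: measure_pmf_single)
  next
    case False
    have "set_pmf (binomial_pmf m (1/2)) \<inter> ((\<lambda>k. (k, m - k)) -` {(x, y)}) = {}"
      using False by auto
    then show ?thesis using False by (simp add: measure_pmf_zero_iff)
  qed
  finally show ?thesis .
qed

lemma pois_pair_decomp:
  assumes lam0: "0 < lam"
  shows "pair_pmf (poisson_pmf lam) (poisson_pmf lam) =
         bind_pmf (poisson_pmf (2 * lam)) (\<lambda>m. map_pmf (\<lambda>k. (k, m - k)) (binomial_pmf m (1/2)))"
proof (rule pmf_eqI)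
  fix z :: "nat \<times> nat"
  obtain x y where z: "z = (x, y)" by (cases z)
  have "pmf (bind_pmf (poisson_pmf (2 * lam)) (\<lambda>m. map_pmf (\<lambda>k. (k, m - k)) (binomial_pmf m (1/2)))) z
      = (\<integral>m. pmf (map_pmf (\<lambda>k. (k, m - k)) (binomial_pmf m (1/2))) (x, y) \<partial>measure_pmf (poisson_pmf (2 * lam)))"
    by (simp add: pmf_bind z)
  also have "\<dots> = (\<integral>m. (if m = x + y then pmf (binomial_pmf m (1/2)) x else 0) \<partial>measure_pmf (poisson_pmf (2 * lam)))"
    by (simp add: pmf_map_split)
  also have "\<dots> = pmf (binomial_pmf (x + y) (1/2)) x * pmf (poisson_pmf (2 * lam)) (x + y)"
    by (subst integral_measure_pmf_real[where A = "{x + y}"]) (auto split: if_splits)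
  also have "\<dots> = pmf (poisson_pmf lam) x * pmf (poisson_pmf lam) y"
  proof -
    define F where "F = (fact (x + y) :: real)"
    define Fx where "Fx = (fact x :: real)"
    define Fy where "Fy = (fact y :: real)"
    have F0: "0 < F" "0 < Fx" "0 < Fy" by (auto simp: F_def Fx_def Fy_def)
    have c: "real ((x + y) choose x) = F / (Fx * Fy)"
      using binomial_fact[of x "x + y"] by (simp add: F_def Fx_def Fy_def)
    have b: "pmf (binomial_pmf (x + y) (1/2)) x = F / (Fx * Fy) * (1/2) ^ (x + y)"
      by (simp add: c power_add)
    have p: "pmf (poisson_pmf (2 * lam)) (x + y) = (2 * lam) ^ (x + y) / F * exp (- (2 * lam))"
      using lam0 by (simp add: F_def)
    have h: "(1/2::real) ^ (x + y) * (2 * lam) ^ (x + y) = lam ^ x * lam ^ y"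
    proof -
      have "(1/2::real) ^ (x + y) * (2 * lam) ^ (x + y) = ((1/2) * (2 * lam)) ^ (x + y)"
        by (rule power_mult_distrib[symmetric])
      also have "\<dots> = lam ^ (x + y)" by simp
      also have "\<dots> = lam ^ x * lam ^ y" by (rule power_add)
      finally show ?thesis .
    qed
    have e: "exp (- (2 * lam)) = exp (- lam) * exp (- lam)"
      by (simp add: exp_add[symmetric])
    have ar: "F / (Fx * Fy) * hh * (q / F * ee) = (hh * q) / (Fx * Fy) * ee" for hh q ee :: real
      using F0 by (simp add: field_simps)
    have "pmf (binomial_pmf (x + y) (1/2)) x * pmf (poisson_pmf (2 * lam)) (x + y)
        = (lam ^ x * lam ^ y) / (Fx * Fy) * (exp (- lam) * exp (- lam))"
      unfolding b p ar h e ..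
    also have "\<dots> = (lam ^ x / Fx * exp (- lam)) * (lam ^ y / Fy * exp (- lam))"
      using F0 by (simp add: field_simps)
    also have "\<dots> = pmf (poisson_pmf lam) x * pmf (poisson_pmf lam) y"
      using lam0 by (simp add: Fx_def Fy_def)
    finally show ?thesis .
  qed
  also have "\<dots> = pmf (pair_pmf (poisson_pmf lam) (poisson_pmf lam)) z"
    by (simp add: pmf_pair z)
  finally show "pmf (pair_pmf (poisson_pmf lam) (poisson_pmf lam)) z =
      pmf (bind_pmf (poisson_pmf (2 * lam)) (\<lambda>m. map_pmf (\<lambda>k. (k, m - k)) (binomial_pmf m (1/2)))) z" by (rule sym)
qed

lemma H0_coord:
  assumes lam0: "0 < lam" and t0: "0 \<le> t"
  shows "measure_pmf.prob (pair_pmf (pois lam) (pois lam)) {z. binom_pval (fst z) (snd z) \<le> t} \<le> t"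
proof -
  define F where "F = (\<lambda>m. map_pmf (\<lambda>k. (k, m - k)) (binomial_pmf m (1/2)))"
  define A where "A = {z. binom_pval (fst z) (snd z) \<le> t}"
  have pe: "pair_pmf (pois lam) (pois lam) = bind_pmf (poisson_pmf (2 * lam)) F"
    using lam0 by (simp add: pois_def F_def pois_pair_decomp)
  have Fm: "measure_pmf.prob (F m) A \<le> t" for m
  proof -
    have "measure_pmf.prob (F m) A = measure_pmf.prob (binomial_pmf m (1/2)) {k. binom_pval k (m - k) \<le> t}"
      by (simp add: F_def A_def vimage_def)
    also have "\<dots> \<le> t" by (rule pval_superuniform[OF t0])
    finally show ?thesis .
  qed
  have "ennreal (measure_pmf.prob (bind_pmf (poisson_pmf (2 * lam)) F) A)
        = emeasure (measure_pmf (bind_pmf (poisson_pmf (2 * lam)) F)) A"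
    by (simp add: measure_pmf.emeasure_eq_measure)
  also have "\<dots> = (\<integral>\<^sup>+ m. emeasure (measure_pmf (F m)) A \<partial>measure_pmf (poisson_pmf (2 * lam)))"
    by (rule emeasure_bind_pmf)
  also have "\<dots> \<le> (\<integral>\<^sup>+ m. ennreal t \<partial>measure_pmf (poisson_pmf (2 * lam)))"
    by (rule nn_integral_mono) (use Fm in \<open>auto simp: measure_pmf.emeasure_eq_measure intro: ennreal_leI\<close>)
  also have "\<dots> = ennreal t" by (simp add: measure_pmf.emeasure_space_1)
  finally have "ennreal (measure_pmf.prob (bind_pmf (poisson_pmf (2 * lam)) F) A) \<le> ennreal t" .
  then have "measure_pmf.prob (bind_pmf (poisson_pmf (2 * lam)) F) A \<le> t"
    using t0 by (simp add: ennreal_le_iff)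
  then show ?thesis by (simp add: pe A_def)
qed

lemma prob_bind_bernoulli:
  assumes "0 \<le> p" "p \<le> 1"
  shows "measure_pmf.prob (bind_pmf (bernoulli_pmf p) F) A =
           p * measure_pmf.prob (F True) A + (1 - p) * measure_pmf.prob (F False) A"
proof -
  have "ennreal (measure_pmf.prob (bind_pmf (bernoulli_pmf p) F) A)
        = emeasure (measure_pmf (bind_pmf (bernoulli_pmf p) F)) A"
    by (simp add: measure_pmf.emeasure_eq_measure)
  also have "\<dots> = (\<integral>\<^sup>+ b. emeasure (measure_pmf (F b)) A \<partial>measure_pmf (bernoulli_pmf p))"
    by (rule emeasure_bind_pmf)
  also have "\<dots> = emeasure (measure_pmf (F True)) A * p + emeasure (measure_pmf (F False)) A * (1 - p)"
    using assms by simp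
  also have "\<dots> = ennreal (measure_pmf.prob (F True) A) * ennreal p + ennreal (measure_pmf.prob (F False) A) * ennreal (1 - p)"
    by (simp add: measure_pmf.emeasure_eq_measure)
  also have "\<dots> = ennreal (measure_pmf.prob (F True) A * p + measure_pmf.prob (F False) A * (1 - p))"
    using assms by (simp add: ennreal_mult ennreal_plus)
  finally have "ennreal (measure_pmf.prob (bind_pmf (bernoulli_pmf p) F) A) =
      ennreal (measure_pmf.prob (F True) A * p + measure_pmf.prob (F False) A * (1 - p))" .
  moreover have "0 \<le> measure_pmf.prob (F True) A * p + measure_pmf.prob (F False) A * (1 - p)"
    using assms by simp
  ultimately have "measure_pmf.prob (bind_pmf (bernoulli_pmf p) F) A =
      measure_pmf.prob (F True) A * p + measure_pmf.prob (F False) A * (1 - p)"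
    by (subst (asm) ennreal_inj) auto
  then show ?thesis by (simp add: mult.commute)
qed

lemma Pi_marginal:
  assumes "finite A" "i \<in> A"
  shows "measure_pmf.prob (Pi_pmf A d p) {\<omega>. Q (\<omega> i)} = measure_pmf.prob (p i) {z. Q z}"
proof -
  have "measure_pmf.prob (Pi_pmf A d p) {\<omega>. Q (\<omega> i)} = measure_pmf.prob (map_pmf (\<lambda>\<omega>. \<omega> i) (Pi_pmf A d p)) {z. Q z}"
    by (simp add: vimage_def)
  also have "map_pmf (\<lambda>\<omega>. \<omega> i) (Pi_pmf A d p) = p i" using assms by (simp add: Pi_pmf_component)
  finally show ?thesis .
qed

lemma ratio_mono:
  fixes x y b A :: real
  assumes "0 \<le> x" "x \<le> b" "b < A" "A \<le> y"
  shows "(A - b)^2 / (A + b) \<le> (y - x)^2 / (y + x)"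
proof -
  define u where "u = y - x"
  define v where "v = A - b"
  have v0: "0 < v" "v \<le> u" using assms by (auto simp: u_def v_def)
  have b0: "0 \<le> b" using assms by linarith
  have "v^2 * (u + 2 * x) \<le> v^2 * (u + 2 * b)" using assms by (intro mult_left_mono) auto
  also have "\<dots> = v * v * u + 2 * b * (v * v)" by (simp add: power2_eq_square algebra_simps)
  also have "\<dots> \<le> u * u * v + 2 * b * (u * u)"
  proof -
    have "v * v * u \<le> u * u * v" using v0 by (simp add: mult_mono mult.commute mult.left_commute)
    moreover have "v * v \<le> u * u" using v0 by (intro mult_mono) auto
    ultimately show ?thesis using b0 by (smt (verit) mult_left_mono)
  qed
  also have "\<dots> = u^2 * (v + 2 * b)" by (simp add: power2_eq_square algebra_simps)
  finally have "v^2 * (u + 2 * x) \<le> u^2 * (v + 2 * b)" .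
  moreover have "0 < v + 2 * b" "0 < u + 2 * x" using v0 b0 assms by auto
  ultimately have "v^2 / (v + 2 * b) \<le> u^2 / (u + 2 * x)"
    by (simp add: divide_simps mult.commute)
  moreover have "v + 2 * b = A + b" "u + 2 * x = y + x" by (auto simp: u_def v_def)
  ultimately show ?thesis by (simp add: u_def v_def add.commute)
qed

lemma Yalt_lb:
  assumes "0 \<le> eps" "eps \<le> 1"
  shows "eps / 2 * measure_pmf.prob (pois (nn * Qplus pp mu)) S \<le> measure_pmf.prob (Y_alt eps nn pp mu) S"
proof -
  define PP where "PP = measure_pmf.prob (pois (nn * Qplus pp mu)) S"
  define PM where "PM = measure_pmf.prob (pois (nn * Qminus pp mu)) S"
  define P0 where "P0 = measure_pmf.prob (pois (nn * pp)) S"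
  have "measure_pmf.prob (Y_alt eps nn pp mu) S = eps * (1/2 * PP + (1 - 1/2) * PM) + (1 - eps) * P0"
    unfolding Y_alt_def using assms
    by (simp add: prob_bind_bernoulli PP_def PM_def P0_def if_distrib[of "\<lambda>M. measure_pmf.prob M S"] cong: if_cong)
  then have eq: "measure_pmf.prob (Y_alt eps nn pp mu) S = eps / 2 * PP + (eps * PM / 2 + (1 - eps) * P0)"
    by (simp add: algebra_simps)
  have "0 \<le> PM" "0 \<le> P0" by (auto simp: PM_def P0_def)
  then have "0 \<le> eps * PM / 2 + (1 - eps) * P0" using assms by simp
  then show ?thesis using eq by (simp add: PP_def)
qed

lemma H1_coord:
  fixes lam L kap w del s0 eps nn pp mu :: real
  assumes L1: "1 \<le> L" and kap0: "0 < kap" and kap1: "kap \<le> 1" and big: "L \<le> kap^2 * (nn * pp)"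
    and wk: "(w + 3) * kap \<le> 1/2" and w0: "0 < w" and s00: "0 \<le> s0"
    and sw: "1 + del \<le> s0 + w" and del0: "0 < del"
    and hoeff: "(1 + del) * L + ln 2 \<le> L * (1 + del)^2 / (1 + kap * (s0 + s0^2 + w * s0))"
    and eps0: "0 \<le> eps" and eps1: "eps \<le> 1"
    and nn0: "0 < nn" and pp0: "0 < pp" and mueq: "nn * mu = s0^2 * L" and mu0: "0 \<le> mu"
  shows "eps / 2 * (exp (- ((w * sqrt L + 2)^2) / (2 * (1 - (w + 2) * kap))) / exp 1
            * (exp (- ((w * sqrt L + 2)^2) / 2) / (2 * exp 1)))
        \<le> measure_pmf.prob (pair_pmf (pois (nn * pp)) (Y_alt eps nn pp mu))
              {z. binom_pval (fst z) (snd z) \<le> exp (- ((1 + del) * L))}"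
proof -
  define lam where "lam = nn * pp"
  define a where "a = sqrt lam"
  define sL where "sL = s0 * sqrt L"
  define c1 where "c1 = s0 + s0^2 + w * s0"
  have lam0: "0 < lam" using nn0 pp0 by (simp add: lam_def)
  have a0: "0 < a" using lam0 by (simp add: a_def)
  have aa: "a * a = lam" using lam0 by (simp add: a_def)
  have sqL1: "1 \<le> sqrt L" using L1 by simp
  have sqLL: "sqrt L * sqrt L = L" using L1 by simp
  have big': "L \<le> kap^2 * lam" using big by (simp add: lam_def)
  have sqLk: "sqrt L \<le> kap * a"
  proof -
    have "sqrt L \<le> sqrt (kap^2 * lam)" using big' by (rule real_sqrt_le_mono)
    also have "\<dots> = kap * a" using kap0 lam0 by (simp add: a_def real_sqrt_mult)
    finally show ?thesis .
  qed
  have ka1: "1 \<le> kap * a" using sqLk sqL1 by linarith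
  have "kap * a \<le> a" using kap0 kap1 a0 by (simp add: mult_left_le_one_le)
  then have a1: "1 \<le> a" using ka1 by linarith
  have "1 * 1 \<le> a * a" using a1 by (intro mult_mono) auto
  then have lam1: "1 \<le> lam" using aa by simp
  have sL0: "0 \<le> sL" using s00 L1 by (simp add: sL_def)
  have sLk: "sL \<le> s0 * kap * a"
  proof -
    have "s0 * sqrt L \<le> s0 * (kap * a)" using sqLk s00 by (rule mult_left_mono)
    then show ?thesis by (simp add: sL_def mult.assoc)
  qed
  have Qp: "nn * Qplus pp mu = (a + sL)^2"
  proof -
    have "0 \<le> sqrt pp + sqrt mu" using mu0 pp0 by simp
    then have "Qplus pp mu = (sqrt pp + sqrt mu)^2" by (simp add: Qplus_def max_absorb1)
    then have "nn * Qplus pp mu = (sqrt nn * (sqrt pp + sqrt mu))^2"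
      using nn0 by (simp add: power_mult_distrib)
    also have "sqrt nn * (sqrt pp + sqrt mu) = sqrt nn * sqrt pp + sqrt nn * sqrt mu"
      by (rule distrib_left)
    also have "sqrt nn * sqrt pp = a" by (simp add: a_def lam_def real_sqrt_mult)
    also have "sqrt nn * sqrt mu = sqrt (s0^2 * L)" by (simp add: real_sqrt_mult[symmetric] mueq)
    also have "\<dots> = sL" using s00 L1 by (simp add: sL_def real_sqrt_mult)
    finally show ?thesis .
  qed
  define b where "b = lam - w * a * sqrt L"
  define Au where "Au = (a + sL)^2 + w * (a + sL) * sqrt L"
  define t where "t = exp (- ((1 + del) * L))"
  have wk1: "w * kap \<le> 1/2" using wk kap0 by (simp add: algebra_simps)
  have aL: "a * sqrt L \<le> kap * lam"
  proof -
    have "a * sqrt L \<le> a * (kap * a)" using sqLk a0 by (intro mult_left_mono) auto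
    also have "a * (kap * a) = kap * (a * a)" by (simp add: algebra_simps)
    finally show ?thesis using aa by simp
  qed
  have Dle: "w * a * sqrt L \<le> w * kap * lam"
    using aL w0 by (simp add: mult.assoc mult_left_mono)
  have b0: "0 < b"
  proof -
    have h: "w * kap * lam \<le> 1/2 * lam" using wk1 lam0 by (intro mult_right_mono) auto
    show ?thesis using h Dle lam0 unfolding b_def by linarith
  qed
  have bl: "b < lam" using w0 a0 sqL1 by (simp add: b_def)
  have lAu: "lam \<le> Au"
  proof -
    have "lam = a^2" using aa by (simp add: power2_eq_square)
    also have "\<dots> \<le> (a + sL)^2" using a0 sL0 by (intro power_mono) auto
    also have "\<dots> \<le> Au" using w0 a0 sL0 sqL1 by (simp add: Au_def)
    finally show ?thesis .
  qed
  have diff: "2 * a * sqrt L * (1 + del) \<le> Au - b"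
  proof -
    have nn: "0 \<le> sL^2 + w * sL * sqrt L" using sL0 w0 sqL1 by simp
    have "2 * a * sqrt L * (1 + del) \<le> 2 * a * sqrt L * (s0 + w)"
      using sw a0 sqL1 by (intro mult_left_mono) auto
    also have "\<dots> = 2 * a * sL + 2 * (w * a * sqrt L)"
      by (simp add: sL_def algebra_simps)
    also have "\<dots> \<le> 2 * a * sL + 2 * (w * a * sqrt L) + (sL^2 + w * sL * sqrt L)"
      using nn by simp
    also have "\<dots> = Au - b"
      using aa by (simp add: Au_def b_def power2_eq_square algebra_simps)
    finally show ?thesis .
  qed
  have summ: "Au + b \<le> 2 * a^2 * (1 + kap * c1)"
  proof -
    have eq: "Au + b = 2 * a^2 + 2 * a * sL + sL^2 + w * sL * sqrt L"
      using aa by (simp add: Au_def b_def power2_eq_square algebra_simps)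
    have t1: "a * sL \<le> a^2 * kap * s0"
    proof -
      have "a * sL \<le> a * (s0 * kap * a)" using sLk a0 by (intro mult_left_mono) auto
      then show ?thesis by (simp add: power2_eq_square algebra_simps)
    qed
    have sL2: "sL^2 = s0^2 * L" using L1 by (simp add: sL_def power_mult_distrib)
    have Lka: "L \<le> kap * a^2"
    proof -
      have "L \<le> kap^2 * a^2" using big' aa by (simp add: power2_eq_square)
      also have "\<dots> \<le> kap * a^2"
      proof (rule mult_right_mono)
        show "kap^2 \<le> kap" using mult_left_le_one_le[of kap kap] kap0 kap1 by (simp add: power2_eq_square)
      qed simp
      finally show ?thesis .
    qed
    have t2: "sL^2 \<le> s0^2 * kap * a^2" using Lka sL2 by (simp add: mult_left_mono mult.assoc)
    have t3: "w * sL * sqrt L \<le> w * s0 * kap * a^2"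
    proof -
      have "w * sL * sqrt L = w * s0 * L" using sqLL by (simp add: sL_def algebra_simps)
      also have "\<dots> \<le> w * s0 * (kap * a^2)" using Lka w0 s00 by (intro mult_left_mono) auto
      finally show ?thesis by (simp add: algebra_simps)
    qed
    define P where "P = a^2 * kap"
    have P0: "0 \<le> P" using kap0 by (simp add: P_def)
    have t1': "a * sL \<le> P * s0" using t1 by (simp add: P_def)
    have t2': "sL^2 \<le> P * s0^2" using t2 by (simp add: P_def algebra_simps)
    have t3': "w * sL * sqrt L \<le> P * (w * s0)" using t3 by (simp add: P_def algebra_simps)
    have n2: "0 \<le> P * s0^2" using P0 by simp
    have n3: "0 \<le> P * (w * s0)" using P0 w0 s00 by simp
    have rhs: "2 * a^2 * (1 + kap * c1) = 2 * a^2 + 2 * (P * s0) + 2 * (P * s0^2) + 2 * (P * (w * s0))"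
      by (simp add: P_def c1_def algebra_simps)
    have lhs: "Au + b = 2 * a^2 + 2 * (a * sL) + sL^2 + w * sL * sqrt L" using eq by simp
    show ?thesis unfolding lhs rhs using t1' t2' t3' n2 n3 by linarith
  qed
  have hb: "(1 + del) * L + ln 2 \<le> (Au - b)^2 / (2 * (Au + b))"
  proof -
    have c10: "0 \<le> c1" using s00 w0 by (simp add: c1_def)
    have "0 \<le> kap * c1" using kap0 c10 by simp
    then have pos: "0 < 1 + kap * c1" by linarith
    have "(1 + del) * L + ln 2 \<le> L * (1 + del)^2 / (1 + kap * c1)" using hoeff by (simp add: c1_def)
    also have "\<dots> = (2 * a * sqrt L * (1 + del))^2 / (2 * (2 * a^2 * (1 + kap * c1)))"
    proof -
      have sq: "(2 * a * sqrt L * (1 + del))^2 = 4 * a^2 * L * (1 + del)^2"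
        using L1 by (simp add: power_mult_distrib)
      have d: "2 * (2 * a^2 * (1 + kap * c1)) = (4 * a^2) * (1 + kap * c1)" by (simp add: algebra_simps)
      have n: "4 * a^2 * L * (1 + del)^2 = (4 * a^2) * (L * (1 + del)^2)" by (simp add: algebra_simps)
      have a2: "4 * a^2 \<noteq> 0" using a0 by simp
      show ?thesis unfolding sq d n using a2 by (subst nonzero_mult_divide_mult_cancel_left) auto
    qed
    also have "\<dots> \<le> (Au - b)^2 / (2 * (Au + b))"
    proof (rule frac_le)
      show "0 \<le> (Au - b)^2" by simp
      show "(2 * a * sqrt L * (1 + del))^2 \<le> (Au - b)^2"
        using diff a0 sqL1 del0 by (intro power_mono) auto
      show "0 < 2 * (Au + b)" using b0 lAu lam0 by simp
      show "2 * (Au + b) \<le> 2 * (2 * a^2 * (1 + kap * c1))" using summ by simp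
    qed
    finally show ?thesis .
  qed
  have ev: "binom_pval x y \<le> t" if xb: "real x \<le> b" and yA: "Au \<le> real y" for x y :: nat
  proof -
    have xy: "x < y" using xb yA bl lAu by linarith
    have r: "(Au - b)^2 / (Au + b) \<le> (real y - real x)^2 / (real y + real x)"
      by (rule ratio_mono) (use xb yA bl lAu in auto)
    have "(1 + del) * L + ln 2 \<le> (real y - real x)^2 / (2 * real (x + y))"
    proof -
      have "(Au - b)^2 / (2 * (Au + b)) = ((Au - b)^2 / (Au + b)) / 2" by simp
      also have "\<dots> \<le> ((real y - real x)^2 / (real y + real x)) / 2" using r by (rule divide_right_mono) simp
      also have "\<dots> = (real y - real x)^2 / (2 * real (x + y))" by (simp add: add.commute)
      finally show ?thesis using hb by linarith
    qed
    then have ex: "exp (- ((real y - real x)^2) / (2 * real (x + y))) \<le> exp (- ((1 + del) * L + ln 2))"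
      by simp
    have "binom_pval x y \<le> 2 * exp (- ((real y - real x)^2) / (2 * real (x + y)))"
      by (rule binom_pval_hoeff[OF xy])
    also have "\<dots> \<le> 2 * exp (- ((1 + del) * L + ln 2))" using ex by simp
    also have "\<dots> = t"
    proof -
      have h2: "exp (- ((1 + del) * L + ln 2)) = exp (- ((1 + del) * L)) * exp (- ln 2)"
        by (simp only: minus_add_distrib exp_add)
      have h3: "exp (- ln (2::real)) = 1/2" by (simp add: exp_minus inverse_eq_divide)
      show ?thesis unfolding h2 h3 t_def by simp
    qed
    finally show ?thesis .
  qed
  define S1 where "S1 = {x::nat. real x \<le> b}"
  define S2 where "S2 = {y::nat. Au \<le> real y}"
  have sub: "S1 \<times> S2 \<subseteq> {z. binom_pval (fst z) (snd z) \<le> t}" using ev by (auto simp: S1_def S2_def)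
  define E1 where "E1 = exp (- ((w * sqrt L + 2)^2) / (2 * (1 - (w + 2) * kap))) / exp 1"
  define E2 where "E2 = exp (- ((w * sqrt L + 2)^2) / 2) / (2 * exp 1)"
  have E1b: "E1 \<le> measure_pmf.prob (pois (nn * pp)) S1"
  proof -
    define D where "D = w * a * sqrt L"
    have D0: "0 \<le> D" using w0 a0 sqL1 by (simp add: D_def)
    have one: "1 \<le> kap * lam"
    proof -
      have "1 * 1 \<le> (kap * a) * (kap * a)" using ka1 by (intro mult_mono) auto
      then have "1 \<le> (kap * a) * (kap * a)" by simp
      also have "\<dots> = kap^2 * lam" using aa by (simp add: power2_eq_square algebra_simps)
      also have "\<dots> \<le> kap * lam" using kap0 kap1 lam0 by (simp add: power2_eq_square mult_right_le_one_le)
      finally show ?thesis .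
    qed
    have ak: "a \<le> kap * lam"
    proof -
      have "a * 1 \<le> a * (kap * a)" using ka1 a0 by (intro mult_left_mono) auto
      also have "a * (kap * a) = kap * (a * a)" by (simp add: algebra_simps)
      finally show ?thesis using aa by simp
    qed
    have sum3: "D + 1 + a \<le> (w + 2) * kap * lam" using Dle one ak by (simp add: D_def algebra_simps)
    have cond: "D + 2 + a \<le> lam / 2"
    proof -
      have "D + 2 + a \<le> (w + 3) * kap * lam" using Dle one ak by (simp add: D_def algebra_simps)
      also have "\<dots> \<le> 1/2 * lam" using wk lam0 by (intro mult_right_mono) auto
      finally show ?thesis by simp
    qed
    have den: "lam * (1 - (w + 2) * kap) \<le> lam - D - 1 - sqrt lam"
      using sum3 by (simp add: a_def[symmetric] algebra_simps)
    have denp: "0 < 1 - (w + 2) * kap" using wk kap0 by (simp add: algebra_simps)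
    have num: "(D + 1 + sqrt lam)^2 \<le> lam * (w * sqrt L + 2)^2"
    proof -
      have "D + 1 + a \<le> a * (w * sqrt L + 2)" using a1 by (simp add: D_def algebra_simps)
      then have "(D + 1 + a)^2 \<le> (a * (w * sqrt L + 2))^2" using D0 a0 by (intro power_mono) auto
      also have "\<dots> = lam * (w * sqrt L + 2)^2" using aa by (simp add: power_mult_distrib power2_eq_square)
      finally show ?thesis by (simp add: a_def)
    qed
    have "(D + 1 + sqrt lam)^2 / (2 * (lam - D - 1 - sqrt lam)) \<le> lam * (w * sqrt L + 2)^2 / (2 * (lam * (1 - (w + 2) * kap)))"
      by (rule frac_le) (use num den denp lam0 in auto)
    also have "\<dots> = (w * sqrt L + 2)^2 / (2 * (1 - (w + 2) * kap))" using lam0 by simp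
    finally have ee: "exp (- ((w * sqrt L + 2)^2) / (2 * (1 - (w + 2) * kap))) \<le> exp (- ((D + 1 + sqrt lam)^2) / (2 * (lam - D - 1 - sqrt lam)))"
      by simp
    have "E1 \<le> exp (- ((D + 1 + sqrt lam)^2) / (2 * (lam - D - 1 - sqrt lam))) / exp 1"
      unfolding E1_def using ee by (simp add: divide_right_mono)
    also have "\<dots> \<le> measure_pmf.prob (poisson_pmf lam) {k. real k \<le> lam - D}"
      by (rule pois_lower_tail[OF lam0 D0]) (use cond in \<open>simp add: a_def\<close>)
    also have "{k. real k \<le> lam - D} = S1" by (simp add: S1_def b_def D_def)
    also have "poisson_pmf lam = pois (nn * pp)" using nn0 pp0 by (simp add: pois_def lam_def)
    finally show ?thesis .
  qed
  have E2b: "eps / 2 * E2 \<le> measure_pmf.prob (Y_alt eps nn pp mu) S2"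
  proof -
    define lamY where "lamY = (a + sL)^2"
    define D where "D = w * (a + sL) * sqrt L"
    have as1: "1 \<le> a + sL" using a1 sL0 by simp
    have "1 * 1 \<le> (a + sL) * (a + sL)" using as1 by (intro mult_mono) auto
    then have lamY1: "1 \<le> lamY" by (simp add: lamY_def power2_eq_square)
    have sqY: "sqrt lamY = a + sL" using as1 by (simp add: lamY_def)
    have D0: "0 \<le> D" using w0 as1 sqL1 by (simp add: D_def)
    have wL: "w * sqrt L \<le> a + sL"
    proof -
      have "w * sqrt L \<le> w * (kap * a)" using sqLk w0 by (intro mult_left_mono) auto
      also have "\<dots> = (w * kap) * a" by simp
      also have "\<dots> \<le> 1 * a" using wk1 a0 by (intro mult_right_mono) auto
      finally show ?thesis using sL0 by simp
    qed
    have DY: "D \<le> lamY"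
    proof -
      have "D = (a + sL) * (w * sqrt L)" by (simp add: D_def algebra_simps)
      also have "\<dots> \<le> (a + sL) * (a + sL)" using wL as1 by (intro mult_left_mono) auto
      finally show ?thesis by (simp add: lamY_def power2_eq_square)
    qed
    have num: "(D + 1 + sqrt lamY)^2 \<le> lamY * (w * sqrt L + 2)^2"
    proof -
      have "D + 1 + sqrt lamY \<le> (a + sL) * (w * sqrt L + 2)" using as1 by (simp add: sqY D_def algebra_simps)
      then have "(D + 1 + sqrt lamY)^2 \<le> ((a + sL) * (w * sqrt L + 2))^2"
        using D0 as1 sqY by (intro power_mono) auto
      also have "\<dots> = lamY * (w * sqrt L + 2)^2" by (simp add: lamY_def power_mult_distrib)
      finally show ?thesis .
    qed
    have "(D + 1 + sqrt lamY)^2 / (2 * lamY) \<le> lamY * (w * sqrt L + 2)^2 / (2 * lamY)"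
      using num lamY1 by (intro divide_right_mono) auto
    also have "\<dots> = (w * sqrt L + 2)^2 / 2" using lamY1 by simp
    finally have ee: "exp (- ((w * sqrt L + 2)^2) / 2) \<le> exp (- ((D + 1 + sqrt lamY)^2) / (2 * lamY))"
      by simp
    have "E2 \<le> exp (- ((D + 1 + sqrt lamY)^2) / (2 * lamY)) / (2 * exp 1)"
      unfolding E2_def using ee by (simp add: divide_right_mono)
    also have "\<dots> \<le> measure_pmf.prob (poisson_pmf lamY) {k. lamY + D \<le> real k}"
      by (rule pois_upper_tail[OF lamY1 D0 DY])
    also have "{k. lamY + D \<le> real k} = S2" by (simp add: S2_def Au_def lamY_def D_def)
    also have "poisson_pmf lamY = pois (nn * Qplus pp mu)" using lamY1 as1 by (simp add: pois_def Qp lamY_def)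
    finally have "E2 \<le> measure_pmf.prob (pois (nn * Qplus pp mu)) S2" .
    then have "eps / 2 * E2 \<le> eps / 2 * measure_pmf.prob (pois (nn * Qplus pp mu)) S2"
      using eps0 by (intro mult_left_mono) auto
    also have "\<dots> \<le> measure_pmf.prob (Y_alt eps nn pp mu) S2" by (rule Yalt_lb[OF eps0 eps1])
    finally show ?thesis .
  qed
  have E10: "0 \<le> E1" by (simp add: E1_def)
  have "eps / 2 * (E1 * E2) = E1 * (eps / 2 * E2)" by simp
  also have "\<dots> \<le> measure_pmf.prob (pois (nn * pp)) S1 * measure_pmf.prob (Y_alt eps nn pp mu) S2"
    using E1b E2b E10 eps0 by (intro mult_mono) (auto simp: E2_def)
  also have "\<dots> = measure_pmf.prob (pair_pmf (pois (nn * pp)) (Y_alt eps nn pp mu)) (S1 \<times> S2)"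
    by (rule measure_pmf_prob_product[symmetric]) auto
  also have "\<dots> \<le> measure_pmf.prob (pair_pmf (pois (nn * pp)) (Y_alt eps nn pp mu)) {z. binom_pval (fst z) (snd z) \<le> t}"
    using sub by (intro measure_pmf.finite_measure_mono) auto
  finally show ?thesis by (simp add: E1_def E2_def t_def)
qed

lemma H0_bound:
  assumes N1: "1 \<le> N" and pos: "\<And>i. i < N \<Longrightarrow> 0 < nn * PP i" and t0: "0 \<le> t"
  shows "measure_pmf.prob (H0_law N nn PP) {\<omega>. min_pval N \<omega> \<le> t} \<le> real N * t"
proof -
  define A where "A = (\<lambda>i. {\<omega>::nat \<Rightarrow> nat \<times> nat. binom_pval (fst (\<omega> i)) (snd (\<omega> i)) \<le> t})"
  have "0 \<in> {..<N}" using N1 by simp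
  then have ne: "{..<N} \<noteq> {}" by blast
  have sub: "{\<omega>. min_pval N \<omega> \<le> t} \<subseteq> (\<Union>i\<in>{..<N}. A i)"
    using ne by (auto simp: min_pval_def A_def Min_le_iff)
  have "measure_pmf.prob (H0_law N nn PP) {\<omega>. min_pval N \<omega> \<le> t}
        \<le> measure_pmf.prob (H0_law N nn PP) (\<Union>i\<in>{..<N}. A i)"
    using sub by (intro measure_pmf.finite_measure_mono) auto
  also have "\<dots> \<le> (\<Sum>i\<in>{..<N}. measure_pmf.prob (H0_law N nn PP) (A i))"
    by (intro measure_pmf.finite_measure_subadditive_finite) auto
  also have "\<dots> \<le> (\<Sum>i\<in>{..<N}. t)"
  proof (intro sum_mono)
    fix i assume i: "i \<in> {..<N}"
    have "measure_pmf.prob (H0_law N nn PP) (A i) =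
          measure_pmf.prob (pair_pmf (pois (nn * PP i)) (pois (nn * PP i))) {z. binom_pval (fst z) (snd z) \<le> t}"
      unfolding H0_law_def A_def using i
      by (subst Pi_marginal[where Q = "\<lambda>z. binom_pval (fst z) (snd z) \<le> t"]) auto
    also have "\<dots> \<le> t" using pos[of i] i t0 by (intro H0_coord) auto
    finally show "measure_pmf.prob (H0_law N nn PP) (A i) \<le> t" .
  qed
  also have "\<dots> = real N * t" by simp
  finally show ?thesis .
qed

lemma H1_bound:
  assumes N1: "1 \<le> N"
    and qb: "\<And>i. i < N \<Longrightarrow> q \<le> measure_pmf.prob (pair_pmf (pois (nn * PP i)) (Y_alt (eps_N \<beta> N) nn (PP i) (mu_N r nn N)))
                 {z. binom_pval (fst z) (snd z) \<le> t}"
  shows "measure_pmf.prob (H1_law \<beta> r N nn PP) {\<omega>. t < min_pval N \<omega>} \<le> exp (- (real N * q))"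
proof -
  define p where "p = (\<lambda>i. pair_pmf (pois (nn * PP i)) (Y_alt (eps_N \<beta> N) nn (PP i) (mu_N r nn N)))"
  define B where "B = (\<lambda>i::nat. {z::nat \<times> nat. t < binom_pval (fst z) (snd z)})"
  have "0 \<in> {..<N}" using N1 by simp
  then have ne: "{..<N} \<noteq> {}" by blast
  have sub: "{\<omega>. t < min_pval N \<omega>} \<subseteq> Pi {..<N} B"
    using ne by (auto simp: min_pval_def B_def Min_gr_iff)
  have compl: "measure_pmf.prob (p i) (B i) = 1 - measure_pmf.prob (p i) {z. binom_pval (fst z) (snd z) \<le> t}" for i
  proof -
    have "B i = space (measure_pmf (p i)) - {z. binom_pval (fst z) (snd z) \<le> t}"
      by (auto simp: B_def)
    moreover have "measure_pmf.prob (p i) (space (measure_pmf (p i)) - {z. binom_pval (fst z) (snd z) \<le> t})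
        = 1 - measure_pmf.prob (p i) {z. binom_pval (fst z) (snd z) \<le> t}"
      by (rule measure_pmf.prob_compl) simp
    ultimately show ?thesis by simp
  qed
  have q1: "q \<le> 1"
  proof -
    have "q \<le> measure_pmf.prob (p 0) {z. binom_pval (fst z) (snd z) \<le> t}"
      using qb[of 0] N1 by (simp add: p_def)
    also have "\<dots> \<le> 1" by (rule measure_pmf.prob_le_1)
    finally show ?thesis .
  qed
  have "measure_pmf.prob (H1_law \<beta> r N nn PP) {\<omega>. t < min_pval N \<omega>}
        \<le> measure_pmf.prob (H1_law \<beta> r N nn PP) (Pi {..<N} B)"
    using sub by (intro measure_pmf.finite_measure_mono) auto
  also have "\<dots> = (\<Prod>i\<in>{..<N}. measure_pmf.prob (p i) (B i))"
    unfolding H1_law_def p_def by (rule measure_Pi_pmf_Pi) auto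
  also have "\<dots> \<le> (\<Prod>i\<in>{..<N}. 1 - q)"
  proof (intro prod_mono conjI)
    fix i assume i: "i \<in> {..<N}"
    show "0 \<le> measure_pmf.prob (p i) (B i)" by simp
    have c: "measure_pmf.prob (p i) (B i) = 1 - measure_pmf.prob (p i) {z. binom_pval (fst z) (snd z) \<le> t}"
      by (rule compl)
    have "q \<le> measure_pmf.prob (p i) {z. binom_pval (fst z) (snd z) \<le> t}" using qb[of i] i by (simp add: p_def)
    then show "measure_pmf.prob (p i) (B i) \<le> 1 - q" using c by linarith
  qed
  also have "\<dots> = (1 - q) ^ N" by simp
  also have "\<dots> \<le> exp (- q) ^ N"
  proof (rule power_mono)
    show "1 - q \<le> exp (- q)" using exp_ge_add_one_self[of "- q"] by simp
    show "0 \<le> 1 - q" using q1 by simp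
  qed
  also have "\<dots> = exp (- (real N * q))" by (simp add: exp_of_nat_mult[symmetric])
  finally show ?thesis .
qed

lemma exp_neg_lim:
  fixes f :: "'a \<Rightarrow> real" and c :: real
  assumes "filterlim f at_top F" "0 < c"
  shows "((\<lambda>x. exp (- (c * f x))) \<longlongrightarrow> 0) F"
proof -
  have "filterlim (\<lambda>x. c * f x) at_top F"
    using filterlim_tendsto_pos_mult_at_top[of "\<lambda>_. c" c F f] assms by auto
  then have "filterlim (\<lambda>x. - (c * f x)) at_bot F" by (simp add: filterlim_uminus_at_bot)
  then show ?thesis by (rule filterlim_compose[OF exp_at_bot])
qed

theorem theorem4:
  fixes \<beta> r :: real and n :: "nat \<Rightarrow> real" and P :: "nat \<Rightarrow> nat \<Rightarrow> real"
  assumes beta: "1/2 < \<beta>" "\<beta> < 1"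
    and r_pos: "0 < r"
    and P_pos: "\<And>N i. 1 \<le> N \<Longrightarrow> i < N \<Longrightarrow> 0 < P N i"
    and P_sum: "\<And>N. 1 \<le> N \<Longrightarrow> (\<Sum>i<N. P N i) = 1"
    and n_pos: "\<And>N. 0 < n N"
    and n_lim: "filterlim n at_top sequentially"
    and high_counts: "filterlim (\<lambda>N. Min ((\<lambda>i. n N * P N i / ln (real N)) ` {..<N})) at_top sequentially"
    and r_above: "r > 2 * (1 - sqrt (1 - \<beta>))\<^sup>2"
  shows "\<exists>t :: nat \<Rightarrow> real.
    (\<lambda>N. measure_pmf.prob (H0_law N (n N) (P N)) {\<omega>. min_pval N \<omega> \<le> t N}
       + measure_pmf.prob (H1_law \<beta> r N (n N) (P N)) {\<omega>. min_pval N \<omega> > t N})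
    \<longlonglongrightarrow> 0"
proof -
  define s0 where "s0 = sqrt (r / 2)"
  define sb where "sb = sqrt (1 - \<beta>)"
  define g where "g = s0 + sb - 1"
  have sb0: "0 < sb" using beta by (simp add: sb_def)
  have sb1: "sb < 1" using beta by (simp add: sb_def)
  have s00: "0 \<le> s0" using r_pos by (simp add: s0_def)
  have s0sq: "s0^2 = r / 2" using r_pos by (simp add: s0_def)
  have g0: "0 < g"
  proof -
    have "(1 - sb)^2 < r / 2" using r_above by (simp add: sb_def)
    then have "sqrt ((1 - sb)^2) < sqrt (r / 2)" by (rule real_sqrt_less_mono)
    then have "1 - sb < s0" using sb1 by (simp add: s0_def)
    then show ?thesis by (simp add: g_def)
  qed
  define del where "del = g / 4"
  have del0: "0 < del" using g0 by (simp add: del_def)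
  define w where "w = max (1 + del - s0) (sb / 2)"
  have w0: "0 < w" using sb0 by (simp add: w_def)
  have sw: "1 + del \<le> s0 + w" by (simp add: w_def)
  have wlt: "w < sb"
  proof -
    have e: "del = s0 / 4 + sb / 4 - 1 / 4" by (simp add: del_def g_def field_simps)
    have "1 + del - s0 < sb" using g0 e unfolding g_def by linarith
    moreover have "sb / 2 < sb" using sb0 by simp
    ultimately show ?thesis by (simp add: w_def)
  qed
  have w2: "w^2 < 1 - \<beta>"
  proof -
    have "w^2 < sb^2" using wlt w0 by (intro power_strict_mono) auto
    also have "sb^2 = 1 - \<beta>" using beta by (simp add: sb_def)
    finally show ?thesis .
  qed
  define th where "th = (1 - \<beta> - w^2) / 2"
  have th0: "0 < th" using w2 by (simp add: th_def)
  define c1 where "c1 = s0 + s0^2 + w * s0"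
  have c10: "0 \<le> c1" using s00 w0 by (simp add: c1_def)
  define kap0 where "kap0 = 1 / (2 * (w + 3))"
  have kap00: "0 < kap0" using w0 by (simp add: kap0_def)
  have kap0w: "(w + 3) * kap0 = 1/2" using w0 by (simp add: kap0_def)
  have kap01: "kap0 \<le> 1" using w0 by (simp add: kap0_def)
  define L where "L = (\<lambda>N::nat. ln (real N))"
  define rho where "rho = (\<lambda>N. Min ((\<lambda>i. n N * P N i / ln (real N)) ` {..<N}))"
  define kap where "kap = (\<lambda>N. inverse (sqrt (rho N)))"
  define iL where "iL = (\<lambda>N. inverse (L N))"
  define isL where "isL = (\<lambda>N. inverse (sqrt (L N)))"
  define t where "t = (\<lambda>N::nat. exp (- ((1 + del) * L N)))"
  define q where "q = (\<lambda>N. eps_N \<beta> N / 2 * (exp (- ((w * sqrt (L N) + 2)^2) / (2 * (1 - (w + 2) * kap N))) / exp 1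
            * (exp (- ((w * sqrt (L N) + 2)^2) / 2) / (2 * exp 1))))"
  define hh where "hh = (\<lambda>N. (1 + del)^2 / (1 + kap N * c1) - (1 + del) - ln 2 * iL N)"
  define hq where "hq = (\<lambda>N. 1 - \<beta> - (ln 4 + 2) * iL N - (w + 2 * isL N)^2 / (2 * (1 - (w + 2) * kap N))
            - (w + 2 * isL N)^2 / 2)"
  have Llim: "filterlim L at_top sequentially"
    unfolding L_def by (rule filterlim_compose[OF ln_at_top filterlim_real_sequentially])
  have rholim: "filterlim rho at_top sequentially" using high_counts by (simp add: rho_def)
  have kaplim: "kap \<longlonglongrightarrow> 0"
    unfolding kap_def by (rule tendsto_inverse_0_at_top[OF filterlim_compose[OF sqrt_at_top rholim]])
  have iLlim: "iL \<longlonglongrightarrow> 0"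
    unfolding iL_def by (rule tendsto_inverse_0_at_top[OF Llim])
  have isLlim: "isL \<longlonglongrightarrow> 0"
    unfolding isL_def by (rule tendsto_inverse_0_at_top[OF filterlim_compose[OF sqrt_at_top Llim]])
  have hhlim: "hh \<longlonglongrightarrow> (1 + del)^2 / (1 + 0 * c1) - (1 + del) - ln 2 * 0"
    unfolding hh_def by (intro tendsto_intros kaplim iLlim) (use c10 in simp)
  have hhpos: "0 < (1 + del)^2 / (1 + 0 * c1) - (1 + del) - ln 2 * 0"
  proof -
    have "(1 + del)^2 / (1 + 0 * c1) - (1 + del) - ln 2 * 0 = del + del * del"
      by (simp add: power2_eq_square algebra_simps)
    moreover have "0 < del * del" by (rule mult_pos_pos[OF del0 del0])
    ultimately show ?thesis using del0 by linarith
  qed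
  have hqlim: "hq \<longlonglongrightarrow> 1 - \<beta> - (ln 4 + 2) * 0 - (w + 2 * 0)^2 / (2 * (1 - (w + 2) * 0)) - (w + 2 * 0)^2 / 2"
    unfolding hq_def by (intro tendsto_intros kaplim iLlim isLlim) auto
  have hqval: "th < 1 - \<beta> - (ln 4 + 2) * 0 - (w + 2 * 0)^2 / (2 * (1 - (w + 2) * 0)) - (w + 2 * 0)^2 / 2"
    using th0 by (simp add: th_def)
  have ev1: "eventually (\<lambda>N. 1 \<le> L N) sequentially" using Llim by (simp add: filterlim_at_top)
  have ev2: "eventually (\<lambda>N. 1 / kap0^2 \<le> rho N) sequentially" using rholim by (simp add: filterlim_at_top)
  have ev3: "eventually (\<lambda>N. 0 < hh N) sequentially" by (rule order_tendstoD(1)[OF hhlim hhpos])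
  have ev4: "eventually (\<lambda>N. th < hq N) sequentially" by (rule order_tendstoD(1)[OF hqlim hqval])
  have bound: "measure_pmf.prob (H0_law N (n N) (P N)) {\<omega>. min_pval N \<omega> \<le> t N}
       + measure_pmf.prob (H1_law \<beta> r N (n N) (P N)) {\<omega>. min_pval N \<omega> > t N}
       \<le> exp (- (del * L N)) + exp (- (1 * exp (th * L N)))"
    if N: "1 \<le> L N" "1 / kap0^2 \<le> rho N" "0 < hh N" "th < hq N" for N
  proof -
    have LN0: "0 < L N" using N by simp
    have Npos: "0 < real N"
    proof (rule ccontr)
      assume "\<not> 0 < real N" then have "N = 0" by simp
      then show False using LN0 by (simp add: L_def)
    qed
    have N1: "1 \<le> N" using Npos by simp
    have NL: "real N = exp (L N)" using Npos by (simp add: L_def)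
    have rho0: "0 < rho N" using N(2) kap00 by (smt (verit) zero_less_divide_1_iff zero_less_power)
    have kpos: "0 < kap N" using rho0 by (simp add: kap_def)
    have kk0: "kap N \<le> kap0"
    proof -
      have "1 / kap0 \<le> sqrt (rho N)"
      proof -
        have "sqrt (1 / kap0^2) \<le> sqrt (rho N)" using N(2) by (rule real_sqrt_le_mono)
        then show ?thesis using kap00 by (simp add: real_sqrt_divide)
      qed
      then have "inverse (sqrt (rho N)) \<le> inverse (1 / kap0)"
        using kap00 by (intro le_imp_inverse_le) auto
      then show ?thesis using kap00 by (simp add: kap_def)
    qed
    have kap1: "kap N \<le> 1" using kk0 kap01 by simp
    have wk: "(w + 3) * kap N \<le> 1/2"
    proof -
      have "(w + 3) * kap N \<le> (w + 3) * kap0" using kk0 w0 by (intro mult_left_mono) auto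
      then show ?thesis using kap0w by simp
    qed
    have Zpos: "0 < 1 - (w + 2) * kap N" using wk kpos by (simp add: algebra_simps)
    have t0: "0 \<le> t N" by (simp add: t_def)
    have H0b: "measure_pmf.prob (H0_law N (n N) (P N)) {\<omega>. min_pval N \<omega> \<le> t N} \<le> exp (- (del * L N))"
    proof -
      have "measure_pmf.prob (H0_law N (n N) (P N)) {\<omega>. min_pval N \<omega> \<le> t N} \<le> real N * t N"
        by (rule H0_bound[OF N1 _ t0]) (use n_pos P_pos N1 in auto)
      also have "real N * t N = exp (- (del * L N))"
        by (simp add: NL t_def exp_add[symmetric] algebra_simps)
      finally show ?thesis .
    qed
    have eps0: "0 \<le> eps_N \<beta> N" by (simp add: eps_N_def)
    have eps1: "eps_N \<beta> N \<le> 1"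
    proof -
      have "eps_N \<beta> N = exp (- \<beta> * L N)" using Npos by (simp add: eps_N_def powr_def L_def)
      also have "\<dots> \<le> exp 0" using beta LN0 by simp
      finally show ?thesis by simp
    qed
    have hoeff: "(1 + del) * L N + ln 2 \<le> L N * (1 + del)^2 / (1 + kap N * (s0 + s0^2 + w * s0))"
    proof -
      have "0 \<le> L N * hh N" using N LN0 by simp
      moreover have "L N * hh N = L N * (1 + del)^2 / (1 + kap N * (s0 + s0^2 + w * s0)) - ((1 + del) * L N + ln 2)"
        using LN0 by (simp add: hh_def iL_def c1_def algebra_simps)
      ultimately show ?thesis by simp
    qed
    have qb: "q N \<le> measure_pmf.prob (pair_pmf (pois (n N * P N i)) (Y_alt (eps_N \<beta> N) (n N) (P N i) (mu_N r (n N) N)))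
                 {z. binom_pval (fst z) (snd z) \<le> t N}" if i: "i < N" for i
    proof -
      have Pi0: "0 < P N i" using P_pos N1 i by auto
      have rle: "rho N \<le> n N * P N i / L N"
        unfolding rho_def L_def using i by (intro Min_le) auto
      have big: "L N \<le> (kap N)^2 * (n N * P N i)"
      proof -
        have "rho N * L N \<le> n N * P N i" using rle LN0 by (simp add: field_simps)
        then have "L N \<le> n N * P N i / rho N" using rho0 by (simp add: field_simps)
        moreover have "(kap N)^2 = 1 / rho N" using rho0 by (simp add: kap_def power_inverse divide_inverse)
        ultimately show ?thesis by simp
      qed
      have mueq: "n N * mu_N r (n N) N = s0^2 * L N"
        using n_pos[of N] by (simp add: mu_N_def s0sq L_def)
      have mu0: "0 \<le> mu_N r (n N) N"
        using n_pos[of N] r_pos LN0 by (simp add: mu_N_def L_def)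
      show ?thesis
        unfolding q_def t_def
        by (rule H1_coord[OF N(1) kpos kap1 big wk w0 s00 sw del0 hoeff eps0 eps1 n_pos Pi0 mueq mu0])
    qed
    have H1b: "measure_pmf.prob (H1_law \<beta> r N (n N) (P N)) {\<omega>. min_pval N \<omega> > t N} \<le> exp (- (real N * q N))"
      by (rule H1_bound[OF N1 qb]) auto
    have Nq: "exp (th * L N) \<le> real N * q N"
    proof -
      define X where "X = (w * sqrt (L N) + 2)^2"
      define Z where "Z = 1 - (w + 2) * kap N"
      have sLs: "sqrt (L N) * sqrt (L N) = L N" using LN0 by simp
      have sLp: "0 < sqrt (L N)" using LN0 by simp
      have X: "X = L N * (w + 2 * isL N)^2"
      proof -
        have "w * sqrt (L N) + 2 = sqrt (L N) * (w + 2 * isL N)"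
          using sLp by (simp add: isL_def field_simps)
        then show ?thesis using sLs by (simp add: X_def power_mult_distrib power2_eq_square)
      qed
      have e: "L N * hq N = L N - \<beta> * L N - (ln 4 + 2) - X / (2 * Z) - X / 2"
        using LN0 by (simp add: hq_def X Z_def iL_def field_simps)
      have "real N * q N = exp (L N) * exp (- (\<beta> * L N)) / 4 * (exp (- X / (2 * Z)) * exp (- X / 2)) / (exp 1 * exp 1)"
        using Npos by (simp add: q_def X_def Z_def eps_N_def powr_def L_def field_simps)
      also have "\<dots> = exp (L N - \<beta> * L N - (ln 4 + 2) - X / (2 * Z) - X / 2)"
      proof -
        have e2: "exp (2::real) = exp 1 * exp 1" by (simp add: exp_add[symmetric])
        have "exp (L N - \<beta> * L N - (ln 4 + 2) - X / (2 * Z) - X / 2)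
            = exp (L N) / exp (\<beta> * L N) / (exp (ln 4) * exp 2) / exp (X / (2 * Z)) / exp (X / 2)"
          by (simp only: exp_diff exp_add)
        also have "\<dots> = exp (L N) / exp (\<beta> * L N) / (4 * (exp 1 * exp 1)) / exp (X / (2 * Z)) / exp (X / 2)"
          using e2 by simp
        finally show ?thesis by (simp add: exp_minus field_simps)
      qed
      also have "\<dots> = exp (L N * hq N)" using e by simp
      finally have "real N * q N = exp (L N * hq N)" .
      moreover have "th * L N \<le> L N * hq N" using N(4) LN0 by (simp add: mult.commute)
      ultimately show ?thesis by simp
    qed
    have x: "exp (- (real N * q N)) \<le> exp (- (1 * exp (th * L N)))" using Nq by simp
    show ?thesis using add_mono[OF H0b order_trans[OF H1b x]] by simp
  qed
  have ev: "eventually (\<lambda>N. 1 \<le> L N \<and> 1 / kap0^2 \<le> rho N \<and> 0 < hh N \<and> th < hq N) sequentially"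
    using ev1 ev2 ev3 ev4 by eventually_elim auto
  have Ulim: "(\<lambda>N. exp (- (del * L N)) + exp (- (1 * exp (th * L N)))) \<longlonglongrightarrow> 0 + 0"
  proof (intro tendsto_add)
    show "(\<lambda>N. exp (- (del * L N))) \<longlonglongrightarrow> 0" by (rule exp_neg_lim[OF Llim del0])
    have "filterlim (\<lambda>N. th * L N) at_top sequentially"
      by (rule filterlim_tendsto_pos_mult_at_top[OF tendsto_const th0 Llim])
    then have "filterlim (\<lambda>N. exp (th * L N)) at_top sequentially"
      by (rule filterlim_compose[OF exp_at_top])
    then show "(\<lambda>N. exp (- (1 * exp (th * L N)))) \<longlonglongrightarrow> 0" by (rule exp_neg_lim) simp
  qed
  show ?thesis
  proof (intro exI[of _ t] tendsto_sandwich[OF _ _ tendsto_const Ulim[simplified]])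
    show "\<forall>\<^sub>F N in sequentially. 0 \<le> measure_pmf.prob (H0_law N (n N) (P N)) {\<omega>. min_pval N \<omega> \<le> t N}
       + measure_pmf.prob (H1_law \<beta> r N (n N) (P N)) {\<omega>. min_pval N \<omega> > t N}" by simp
    show "\<forall>\<^sub>F N in sequentially. measure_pmf.prob (H0_law N (n N) (P N)) {\<omega>. min_pval N \<omega> \<le> t N}
       + measure_pmf.prob (H1_law \<beta> r N (n N) (P N)) {\<omega>. min_pval N \<omega> > t N}
       \<le> exp (- (del * L N)) + exp (- exp (th * L N))"
      using ev by eventually_elim (use bound in auto)
  qed
qed

end
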